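(* Let $\mathbf{u}$ be a quasi-definite linear functional with SMOP $(P_n)_{n\ge0}$ and associated polynomials of the first kind $(P^{(1)}_n)_{n\ge0}$, let $c\in\mathbb{C}$, and let $\widehat{\mathbf{u}}$ be a linear functional with $\mathbf{u}=(x-c)^2\widehat{\mathbf{u}}$. Put $S_n(x)=(\widehat{\mathbf{u}}_1-c\widehat{\mathbf{u}}_0)P_n(x)+\mathbf{u}_0P^{(1)}_{n-1}(x)$ for $n\ge0$ and, for $n\ge2$, $$d_n^*=\det\begin{pmatrix}S_{n-2}(c)&S_{n-1}(c)\\ S_{n-2}'(c)+\widehat{\mathbf{u}}_0P_{n-2}(c)&S_{n-1}'(c)+\widehat{\mathbf{u}}_0P_{n-1}(c)\end{pmatrix}.$$ Then $\widehat{\mathbf{u}}$ is quasi-definite if and only if $\widehat{\mathbf{u}}_0\neq0$ and $d_n^*\neq0$ for all $n\ge2$. In that case its SMOP $(Q_n)_{n\ge0}$ is given by $Q_0=1$, $Q_1(x)=x-\widehat{\mathbf{u}}_1/\widehat{\mathbf{u}}_0$, and for $n\ge2$ $$Q_n(x)=\frac{1}{d_n^*}\det\begin{pmatrix}P_n(x)&P_{n-1}(x)&P_{n-2}(x)\\ S_n'(c)+\widehat{\mathbf{u}}_0P_n(c)&S_{n-1}'(c)+\widehat{\mathbf{u}}_0P_{n-1}(c)&S_{n-2}'(c)+\widehat{\mathbf{u}}_0P_{n-2}(c)\\ S_n(c)&S_{n-1}(c)&S_{n-2}(c)\end{pmatrix}.$$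
   Context: Linear functionals on the complex polynomials $\mathbb{P}$, moments $\mathbf{u}_n=\langle\mathbf{u},x^n\rangle$, $\langle(x-c)^2\widehat{\mathbf{u}},p\rangle=\langle\widehat{\mathbf{u}},(x-c)^2p\rangle$. A functional is quasi-definite if all leading principal submatrices of its Hankel moment matrix $(\mathbf{u}_{i+j})_{i,j\ge0}$ are nonsingular; it then has a unique sequence of monic orthogonal polynomials (SMOP) $(P_n)$, $\deg P_n=n$, $\langle\mathbf{u},P_nP_m\rangle=K_n\delta_{nm}$, $K_n\ne0$, with recurrence $xP_n=P_{n+1}+b_nP_n+a_nP_{n-1}$, $P_{-1}=0,P_0=1$, $a_n\neq0$. The associated polynomials of the first kind are the monic polynomials with $xP^{(1)}_n=P^{(1)}_{n+1}+b_{n+1}P^{(1)}_n+a_{n+1}P^{(1)}_{n-1}$, $P^{(1)}_{-1}=0$, $P^{(1)}_0=1$. *)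

theory Defs
  imports "Jordan_Normal_Form.Determinant" "HOL-Computational_Algebra.Polynomial"
begin

text \<open>A linear functional on complex polynomials is represented by its moment
  sequence; its action on a polynomial is obtained by linearity.\<close>

definition lf :: "(nat \<Rightarrow> complex) \<Rightarrow> complex poly \<Rightarrow> complex" where
  "lf u p = (\<Sum>i\<le>degree p. coeff p i * u i)"

definition hankel :: "(nat \<Rightarrow> complex) \<Rightarrow> nat \<Rightarrow> complex mat" where
  "hankel u n = mat n n (\<lambda>(i, j). u (i + j))"

definition quasi_definite :: "(nat \<Rightarrow> complex) \<Rightarrow> bool" where
  "quasi_definite u \<longleftrightarrow> (\<forall>n. det (hankel u (Suc n)) \<noteq> 0)"

definition is_SMOP :: "(nat \<Rightarrow> complex) \<Rightarrow> (nat \<Rightarrow> complex poly) \<Rightarrow> bool" where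
  "is_SMOP u P \<longleftrightarrow>
     (\<forall>n. degree (P n) = n \<and> lead_coeff (P n) = 1) \<and>
     (\<forall>n m. n \<noteq> m \<longrightarrow> lf u (P n * P m) = 0) \<and>
     (\<forall>n. lf u (P n * P n) \<noteq> 0)"

fun assoc1 :: "(nat \<Rightarrow> complex) \<Rightarrow> (nat \<Rightarrow> complex) \<Rightarrow> nat \<Rightarrow> complex poly" where
  "assoc1 a b 0 = 1"
| "assoc1 a b (Suc 0) = [:- b 1, 1:]"
| "assoc1 a b (Suc (Suc n)) =
     [:- b (Suc (Suc n)), 1:] * assoc1 a b (Suc n) - smult (a (Suc (Suc n))) (assoc1 a b n)"

text \<open>P1m a b n = P^{(1)}_{n-1}, with P^{(1)}_{-1} = 0.\<close>
definition P1m :: "(nat \<Rightarrow> complex) \<Rightarrow> (nat \<Rightarrow> complex) \<Rightarrow> nat \<Rightarrow> complex poly" where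
  "P1m a b n = (if n = 0 then 0 else assoc1 a b (n - 1))"

definition Spoly :: "(nat \<Rightarrow> complex) \<Rightarrow> (nat \<Rightarrow> complex) \<Rightarrow> complex
    \<Rightarrow> (nat \<Rightarrow> complex poly) \<Rightarrow> (nat \<Rightarrow> complex) \<Rightarrow> (nat \<Rightarrow> complex) \<Rightarrow> nat \<Rightarrow> complex poly" where
  "Spoly u uh c P a b n = smult (uh 1 - c * uh 0) (P n) + smult (u 0) (P1m a b n)"

definition Tval :: "(nat \<Rightarrow> complex) \<Rightarrow> (nat \<Rightarrow> complex) \<Rightarrow> complex
    \<Rightarrow> (nat \<Rightarrow> complex poly) \<Rightarrow> (nat \<Rightarrow> complex) \<Rightarrow> (nat \<Rightarrow> complex) \<Rightarrow> nat \<Rightarrow> complex" where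
  "Tval u uh c P a b n = poly (pderiv (Spoly u uh c P a b n)) c + uh 0 * poly (P n) c"

definition dstar :: "(nat \<Rightarrow> complex) \<Rightarrow> (nat \<Rightarrow> complex) \<Rightarrow> complex
    \<Rightarrow> (nat \<Rightarrow> complex poly) \<Rightarrow> (nat \<Rightarrow> complex) \<Rightarrow> (nat \<Rightarrow> complex) \<Rightarrow> nat \<Rightarrow> complex" where
  "dstar u uh c P a b n = det (mat_of_rows_list 2
     [[poly (Spoly u uh c P a b (n - 2)) c, poly (Spoly u uh c P a b (n - 1)) c],
      [Tval u uh c P a b (n - 2), Tval u uh c P a b (n - 1)]])"

definition Qhat :: "(nat \<Rightarrow> complex) \<Rightarrow> (nat \<Rightarrow> complex) \<Rightarrow> complex
    \<Rightarrow> (nat \<Rightarrow> complex poly) \<Rightarrow> (nat \<Rightarrow> complex) \<Rightarrow> (nat \<Rightarrow> complex) \<Rightarrow> nat \<Rightarrow> complex poly" where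
  "Qhat u uh c P a b n =
    (if n = 0 then 1
     else if n = 1 then [:- (uh 1 / uh 0), 1:]
     else smult (1 / dstar u uh c P a b n)
       (det (mat_of_rows_list 3
          [[P n, P (n - 1), P (n - 2)],
           [[:Tval u uh c P a b n:], [:Tval u uh c P a b (n - 1):], [:Tval u uh c P a b (n - 2):]],
           [[:poly (Spoly u uh c P a b n) c:], [:poly (Spoly u uh c P a b (n - 1)) c:],
            [:poly (Spoly u uh c P a b (n - 2)) c:]]])))"

end

theory Submission
  imports Defs "Jordan_Normal_Form.Determinant"
begin

lemma lf_upto: "degree p < N \<Longrightarrow> lf v p = (\<Sum>i<N. coeff p i * v i)"
  unfolding lf_def
  by (rule sum.mono_neutral_left) (auto simp: coeff_eq_0)

lemma lf_add: "lf v (p + q) = lf v p + lf v q"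
proof -
  let ?N = "Suc (max (degree p) (degree q))"
  have "degree (p+q) < ?N" using degree_add_le_max[of p q] by simp
  then show ?thesis
    by (simp add: lf_upto[of _ ?N] sum.distrib algebra_simps)
qed

lemma lf_smult: "lf v (smult k p) = k * lf v p"
  unfolding lf_def by (simp add: sum_distrib_left algebra_simps)

lemma lf_0[simp]: "lf v 0 = 0" unfolding lf_def by simp

lemma lf_minus: "lf v (- p) = - lf v p"
  using lf_smult[of v "-1" p] by simp

lemma lf_diff: "lf v (p - q) = lf v p - lf v q"
  using lf_add[of v p "-q"] lf_minus[of v q] by simp

lemma lf_sum: "finite A \<Longrightarrow> lf v (\<Sum>x\<in>A. f x) = (\<Sum>x\<in>A. lf v (f x))"
  by (induction A rule: finite_induct) (auto simp: lf_add)

lemma lf_const[simp]: "lf v [:k:] = k * v 0"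
  unfolding lf_def by simp

lemma lf_lin: "lf v [:k0, k1:] = k0 * v 0 + k1 * v 1"
  by (subst lf_upto[of _ 2]) (auto simp: numeral_2_eq_2 degree_pCons_le le_less_trans)

lemma lf_monom_mult: "degree q < N \<Longrightarrow> lf v (monom 1 k * q) = (\<Sum>j<N. coeff q j * v (j + k))"
proof -
  assume q: "degree q < N"
  have "degree (monom 1 k * q) < N + k"
  proof (cases "q = 0")
    case False
    then show ?thesis using q by (simp add: degree_mult_eq degree_monom_eq)
  qed (use q in simp)
  then have "lf v (monom 1 k * q) = (\<Sum>i<k + N. coeff (monom 1 k * q) i * v i)"
    by (simp add: lf_upto add.commute)
  also have "\<dots> = (\<Sum>i<k. coeff (monom 1 k * q) i * v i) + (\<Sum>i=k..<k+N. coeff (monom 1 k * q) i * v i)"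
    by (simp add: sum.atLeastLessThan_concat[symmetric] lessThan_atLeast0 flip: atLeast0LessThan)
  also have "(\<Sum>i<k. coeff (monom 1 k * q) i * v i) = 0"
    by (simp add: coeff_monom_mult)
  also have "(\<Sum>i=k..<k+N. coeff (monom 1 k * q) i * v i) = (\<Sum>j=0..<N. coeff q j * v (j + k))"
    using sum.shift_bounds_nat_ivl[of "\<lambda>i. coeff (monom 1 k * q) i * v i" 0 k N]
    by (simp add: coeff_monom_mult add.commute)
  finally show ?thesis by (simp add: atLeast0LessThan)
qed


definition ND :: "(nat \<Rightarrow> complex) \<Rightarrow> nat \<Rightarrow> bool" where
  "ND v n \<longleftrightarrow> (\<forall>q. degree q < n \<longrightarrow> (\<forall>p. degree p < n \<longrightarrow> lf v (q * p) = 0) \<longrightarrow> q = 0)"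

lemma hankel_carrier: "hankel v n \<in> carrier_mat n n" unfolding hankel_def by simp

lemma hankel_mulvec:
  assumes "dim_vec x = n" "k < n" "\<And>j. j < n \<Longrightarrow> coeff q j = x $ j" "degree q < n"
  shows "(hankel v n *\<^sub>v x) $ k = lf v (monom 1 k * q)"
proof -
  have "(hankel v n *\<^sub>v x) $ k = (\<Sum>j<n. v (k + j) * x $ j)"
    using assms by (simp add: hankel_def mult_mat_vec_def scalar_prod_def atLeast0LessThan)
  also have "\<dots> = (\<Sum>j<n. coeff q j * v (j + k))"
    using assms by (simp add: algebra_simps)
  also have "\<dots> = lf v (monom 1 k * q)" using lf_monom_mult[OF assms(4)] by simp
  finally show ?thesis .
qed

lemma det_ND: assumes "det (hankel v n) \<noteq> 0" shows "ND v n"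
  unfolding ND_def
proof (intro allI impI)
  fix q :: "complex poly"
  assume q: "degree q < n" and orth: "\<forall>p. degree p < n \<longrightarrow> lf v (q * p) = 0"
  define x where "x = vec n (coeff q)"
  have x: "x \<in> carrier_vec n" unfolding x_def by simp
  have "hankel v n *\<^sub>v x = 0\<^sub>v n"
  proof (rule eq_vecI)
    fix k assume k: "k < dim_vec (0\<^sub>v n :: complex vec)"
    then have k: "k < n" by simp
    have "(hankel v n *\<^sub>v x) $ k = lf v (monom 1 k * q)"
      by (rule hankel_mulvec) (use q k in \<open>auto simp: x_def\<close>)
    also have "\<dots> = 0" using orth[rule_format, of "monom 1 k"] k
      by (simp add: degree_monom_eq mult.commute)
    finally show "(hankel v n *\<^sub>v x) $ k = 0\<^sub>v n $ k" using k by simp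
  qed (simp add: hankel_def)
  then have "x = 0\<^sub>v n"
    using det_0_iff_vec_prod_zero_field[OF hankel_carrier[of v n]] assms x by blast
  then have "\<And>j. j < n \<Longrightarrow> coeff q j = 0"
    unfolding x_def by (metis index_vec index_zero_vec(1))
  then show "q = 0"
    by (metis coeff_eq_0 leading_coeff_0_iff linorder_not_le q)
qed

lemma ND_det: assumes "ND v n" shows "det (hankel v n) \<noteq> 0"
proof
  assume "det (hankel v n) = 0"
  then obtain x where x: "x \<in> carrier_vec n" "x \<noteq> 0\<^sub>v n" "hankel v n *\<^sub>v x = 0\<^sub>v n"
    using det_0_iff_vec_prod_zero_field[OF hankel_carrier[of v n]] by blast
  have n: "n > 0"
  proof (rule ccontr)
    assume "\<not> n > 0"
    then have "n = 0" by simp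
    then show False using x by (auto simp: vec_eq_iff)
  qed
  define q where "q = (\<Sum>j<n. monom (x $ j) j)"
  have cq: "coeff q j = (if j < n then x $ j else 0)" for j
    unfolding q_def coeff_sum by (simp add: coeff_monom)
  have dq: "degree q < n"
  proof -
    have "degree q \<le> n - 1" by (rule degree_le) (use n in \<open>auto simp: cq\<close>)
    then show ?thesis using n by simp
  qed
  have "q = 0"
    using assms unfolding ND_def
  proof (elim allE impE)
    show "degree q < n" by (rule dq)
    show "\<forall>p. degree p < n \<longrightarrow> lf v (q * p) = 0"
    proof (intro allI impI)
      fix p :: "complex poly" assume p: "degree p < n"
      have pe: "p = (\<Sum>k\<le>n-1. smult (coeff p k) (monom 1 k))"
        using poly_as_sum_of_monoms'[of p "n-1"] p by (simp add: smult_monom)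
      have "lf v (q * p) = (\<Sum>k\<le>n-1. coeff p k * lf v (monom 1 k * q))"
        by (subst pe) (simp add: sum_distrib_left lf_sum lf_smult mult.commute mult.left_commute)
      also have "\<dots> = (\<Sum>k\<le>n-1. coeff p k * (hankel v n *\<^sub>v x) $ k)"
      proof (rule sum.cong)
        fix k assume "k \<in> {..n-1}"
        then have "k < n" using n by auto
        then show "coeff p k * lf v (monom 1 k * q) = coeff p k * (hankel v n *\<^sub>v x) $ k"
          using hankel_mulvec[of x n k q v] x dq by (simp add: cq)
      qed simp
      also have "\<dots> = 0" using x n by simp
      finally show "lf v (q * p) = 0" .
    qed
  qed
  then have "x = 0\<^sub>v n"
  proof (intro eq_vecI)
    fix i assume "q = 0" "i < dim_vec (0\<^sub>v n :: complex vec)"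
    then show "x $ i = 0\<^sub>v n $ i" using cq[of i] by simp
  qed (use x(1) in simp)
  then show False using x by simp
qed

lemma qd_ND: "quasi_definite v \<longleftrightarrow> (\<forall>n. ND v n)"
proof
  assume "quasi_definite v"
  then have "ND v (Suc n)" for n unfolding quasi_definite_def using det_ND by blast
  moreover have "ND v 0" unfolding ND_def by simp
  ultimately show "\<forall>n. ND v n" by (metis not0_implies_Suc)
qed (auto simp: quasi_definite_def ND_det)


lemma deg_less: "degree r \<le> d \<Longrightarrow> coeff r d = 0 \<Longrightarrow> r = 0 \<or> degree r < d"
  by (metis le_neq_implies_less leading_coeff_0_iff)

lemma SMOP_deg: "is_SMOP v Q \<Longrightarrow> degree (Q n) = n"
  unfolding is_SMOP_def by blast
lemma SMOP_lc: "is_SMOP v Q \<Longrightarrow> coeff (Q n) n = 1"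
  unfolding is_SMOP_def by metis
lemma SMOP_nz: "is_SMOP v Q \<Longrightarrow> lf v (Q n * Q n) \<noteq> 0"
  unfolding is_SMOP_def by blast
lemma SMOP_ort: "is_SMOP v Q \<Longrightarrow> n \<noteq> m \<Longrightarrow> lf v (Q n * Q m) = 0"
  unfolding is_SMOP_def by blast

lemma lf_mult_add: "lf v (q * (p + r)) = lf v (q * p) + lf v (q * r)"
  by (simp add: distrib_left lf_add)

lemma SMOP_orth:
  assumes S: "is_SMOP v Q"
  shows "p = 0 \<or> degree p < n \<Longrightarrow> lf v (Q n * p) = 0"
proof (induction "degree p" arbitrary: p rule: less_induct)
  case less
  show ?case
  proof (cases "p = 0")
    case False
    define d where "d = degree p"
    define lc where "lc = lead_coeff p"
    define r where "r = p - smult lc (Q d)"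
    have Qd: "degree (Q d) = d" "lead_coeff (Q d) = 1" using SMOP_deg[OF S] SMOP_lc[OF S] by auto
    have "degree r \<le> d" unfolding r_def
      using degree_smult_le[of lc "Q d"] Qd(1) by (intro degree_diff_le) (simp_all add: d_def)
    moreover have "coeff r d = 0" unfolding r_def using Qd by (simp add: lc_def d_def)
    ultimately have r: "r = 0 \<or> degree r < d" by (rule deg_less)
    have dn: "d < n" using less.prems False by (simp add: d_def)
    have p: "p = smult lc (Q d) + r" unfolding r_def by simp
    have "lf v (Q n * p) = lc * lf v (Q n * Q d) + lf v (Q n * r)"
      by (subst p) (simp add: lf_mult_add lf_smult)
    also have "lf v (Q n * Q d) = 0" using S dn unfolding is_SMOP_def by auto
    also have "lf v (Q n * r) = 0"
    proof (cases "r = 0")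
      case False
      then show ?thesis using r dn by (intro less.hyps) (auto simp: d_def)
    qed simp
    finally show ?thesis by simp
  qed simp
qed

lemma SMOP_ND:
  assumes S: "is_SMOP v Q" shows "ND v n"
  unfolding ND_def
proof (intro allI impI; rule ccontr)
  fix q :: "complex poly"
  assume q: "degree q < n" and orth: "\<forall>p. degree p < n \<longrightarrow> lf v (q * p) = 0" and nz: "q \<noteq> 0"
  define d where "d = degree q"
  define lc where "lc = lead_coeff q"
  define r where "r = q - smult lc (Q d)"
  have Qd: "degree (Q d) = d" "lead_coeff (Q d) = 1" "lf v (Q d * Q d) \<noteq> 0"
    using SMOP_deg[OF S] SMOP_lc[OF S] SMOP_nz[OF S] by auto
  have "degree r \<le> d" unfolding r_def
    using degree_smult_le[of lc "Q d"] Qd(1) by (intro degree_diff_le) (simp_all add: d_def)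
  moreover have "coeff r d = 0" unfolding r_def using Qd by (simp add: lc_def d_def)
  ultimately have r: "r = 0 \<or> degree r < d" by (rule deg_less)
  have qe: "q = smult lc (Q d) + r" unfolding r_def by simp
  have "0 = lf v (q * Q d)" using orth q Qd by (simp add: d_def)
  also have "\<dots> = lc * lf v (Q d * Q d) + lf v (Q d * r)"
  proof -
    have "q * Q d = smult lc (Q d * Q d) + Q d * r" by (subst qe) (simp add: algebra_simps)
    then show ?thesis by (simp add: lf_add lf_smult)
  qed
  also have "lf v (Q d * r) = 0" by (rule SMOP_orth[OF S]) (use r in auto)
  finally have "lc = 0" using Qd by simp
  then show False using nz by (simp add: lc_def)
qed

lemma SMOP_qd: "is_SMOP v Q \<Longrightarrow> quasi_definite v"
  using SMOP_ND qd_ND by blast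

lemma SMOP_unique:
  assumes S: "is_SMOP v Q" and R: "is_SMOP v R" shows "Q = R"
proof
  fix n
  define D where "D = Q n - R n"
  have d: "degree (Q n) = n" "lead_coeff (Q n) = 1" "degree (R n) = n" "lead_coeff (R n) = 1"
    using SMOP_deg[OF S] SMOP_lc[OF S] SMOP_deg[OF R] SMOP_lc[OF R] by auto
  have "degree D \<le> n" unfolding D_def by (rule degree_diff_le) (auto simp: d)
  moreover have "coeff D n = 0" unfolding D_def using d by simp
  ultimately have Dl: "D = 0 \<or> degree D < n" by (rule deg_less)
  have "D = 0"
  proof (cases "D = 0")
    case False
    then have dD: "degree D < n" using Dl by simp
    have "\<forall>p. degree p < n \<longrightarrow> lf v (D * p) = 0"
      using SMOP_orth[OF S, of _ n] SMOP_orth[OF R, of _ n]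
      by (auto simp: D_def left_diff_distrib lf_diff)
    then show ?thesis using SMOP_ND[OF S, of n] dD unfolding ND_def by blast
  qed
  then show "Q n = R n" by (simp add: D_def)
qed


locale setting =
  fixes u uh :: "nat \<Rightarrow> complex" and c :: complex
    and P :: "nat \<Rightarrow> complex poly" and a b :: "nat \<Rightarrow> complex"
  assumes qd: "quasi_definite u"
    and smop: "is_SMOP u P"
    and rec0: "[:0, 1:] * P 0 = P 1 + smult (b 0) (P 0)"
    and rec: "\<And>n. [:0, 1:] * P (Suc n) = P (Suc (Suc n)) + smult (b (Suc n)) (P (Suc n))
                      + smult (a (Suc n)) (P n)"
    and anz: "\<And>n. n \<ge> 1 \<Longrightarrow> a n \<noteq> 0"
    and rel: "\<And>p. lf u p = lf uh ([:- c, 1:] ^ 2 * p)"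
begin

abbreviation "L \<equiv> [:- c, 1:]"
abbreviation "S n \<equiv> poly (Spoly u uh c P a b n) c"
abbreviation "T n \<equiv> Tval u uh c P a b n"
abbreviation "ds n \<equiv> dstar u uh c P a b n"

lemma gen: "smult k (X*p - smult al q) + smult u0 (X*r - smult al s) = X * (smult k p + smult u0 r) - smult al (smult k q + smult u0 (s::complex poly))"
  by (simp add: algebra_simps smult_add_right smult_diff_right)
lemma gen2: "pderiv ([:x,1:] * p - smult al (q::complex poly)) = [:x,1:] * pderiv p + p - smult al (pderiv q)"
  unfolding pderiv_diff pderiv_mult pderiv_smult by (simp add: pderiv_pCons algebra_simps)

lemma lf_one[simp]: "lf v 1 = v 0" using lf_const[of v 1] by (simp add: one_pCons)

lemma P0: "P 0 = 1"
proof -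
  have "degree (P 0) = 0" "coeff (P 0) 0 = 1" using SMOP_deg[OF smop] SMOP_lc[OF smop] by auto
  then show ?thesis by (metis degree_0_id one_pCons)
qed

lemma P1: "P 1 = [:- b 0, 1:]"
proof -
  have "[:0, 1:] = P 1 + [:b 0:]" using rec0 by (simp add: P0)
  then have "P 1 = [:0, 1:] - [:b 0:]" by (metis add_diff_cancel)
  then show ?thesis by simp
qed

lemma P1': "P (Suc 0) = [:- b 0, 1:]" using P1 by simp

lemma Prec: "P (Suc (Suc n)) = [:- b (Suc n), 1:] * P (Suc n) - smult (a (Suc n)) (P n)"
proof -
  have "[:- b (Suc n), 1:] * P (Suc n) = [:0, 1:] * P (Suc n) - smult (b (Suc n)) (P (Suc n))"
    by (simp add: algebra_simps smult_add_left flip: smult_diff_left)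
  then show ?thesis using rec[of n] by simp
qed

lemma LP: "L * P (Suc n) = P (Suc (Suc n)) + smult (b (Suc n) - c) (P (Suc n)) + smult (a (Suc n)) (P n)"
proof -
  have "L * P (Suc n) = [:0, 1:] * P (Suc n) - smult c (P (Suc n))"
    by (simp add: algebra_simps flip: smult_diff_left)
  then show ?thesis using rec[of n] by (simp add: algebra_simps smult_diff_left)
qed

lemma LP0: "L * P 0 = P 1 + smult (b 0 - c) (P 0)"
  by (simp add: P0 P1 P1' algebra_simps)

lemma uP: "lf u (P (Suc n)) = 0"
  using SMOP_orth[OF smop, of 1 "Suc n"] by simp

lemma P1m_rec: "P1m a b (Suc (Suc n)) = [:- b (Suc n), 1:] * P1m a b (Suc n) - smult (a (Suc n)) (P1m a b n)"
  by (cases n) (simp_all add: P1m_def)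

lemma Spoly_rec: "Spoly u uh c P a b (Suc (Suc n)) =
   [:- b (Suc n), 1:] * Spoly u uh c P a b (Suc n) - smult (a (Suc n)) (Spoly u uh c P a b n)"
  unfolding Spoly_def Prec P1m_rec by (rule gen)

lemma S_rec: "S (Suc (Suc n)) = (c - b (Suc n)) * S (Suc n) - a (Suc n) * S n"
  by (simp add: Spoly_rec algebra_simps)

lemma T_rec: "T (Suc (Suc n)) = S (Suc n) + (c - b (Suc n)) * T (Suc n) - a (Suc n) * T n"
  unfolding Tval_def Spoly_rec[of n] gen2 Prec[of n] by (simp add: algebra_simps)

lemma s_eq: "lf uh (L * P n) = S n"
proof -
  have "lf uh (L * P n) = S n \<and> lf uh (L * P (Suc n)) = S (Suc n)" for n
  proof (induction n)
    case 0
    have e: "L * P 1 = L^2 + smult (c - b 0) L" by (simp add: P1 P1' algebra_simps power2_eq_square)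
    have "lf uh (L * P 1) = u 0 + (c - b 0) * lf uh L"
      unfolding e lf_add lf_smult using rel[of 1] by simp
    then show ?case by (simp add: P0 lf_lin Spoly_def P1m_def P1 P1' algebra_simps)
  next
    case (Suc n)
    have e: "L^2 * P (Suc n) = L * P (Suc (Suc n)) + smult (b (Suc n) - c) (L * P (Suc n)) + smult (a (Suc n)) (L * P n)"
    proof -
      have "L^2 * P (Suc n) = L * (L * P (Suc n))" by (simp only: power2_eq_square mult.assoc)
      also have "\<dots> = L * (P (Suc (Suc n)) + smult (b (Suc n) - c) (P (Suc n)) + smult (a (Suc n)) (P n))"
        by (simp only: LP)
      finally show ?thesis by (simp only: distrib_left mult_smult_right)
    qed
    have "lf uh (L^2 * P (Suc n)) = lf uh (L * P (Suc (Suc n))) + (b (Suc n) - c) * lf uh (L * P (Suc n)) + a (Suc n) * lf uh (L * P n)"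
      by (simp only: e lf_add lf_smult)
    then have "0 = lf uh (L * P (Suc (Suc n))) + (b (Suc n) - c) * S (Suc n) + a (Suc n) * S n"
      using rel[of "P (Suc n)"] uP[of n] Suc.IH by simp
    then show ?case using Suc.IH S_rec[of n] by (simp add: algebra_simps)
  qed
  then show ?thesis by blast
qed

lemma t_eq: "lf uh (P n) = T n"
proof -
  have "lf uh (P n) = T n \<and> lf uh (P (Suc n)) = T (Suc n)" for n
  proof (induction n)
    case 0
    then show ?case by (simp add: P0 P1 lf_lin pderiv_pCons Tval_def Spoly_def P1m_def P1' algebra_simps)
  next
    case (Suc n)
    have "S (Suc n) = lf uh (P (Suc (Suc n))) + (b (Suc n) - c) * T (Suc n) + a (Suc n) * T n"
      using Suc.IH unfolding s_eq[of "Suc n", symmetric] LP lf_add lf_smult by simp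
    then show ?case using Suc.IH T_rec[of n] by (simp add: algebra_simps)
  qed
  then show ?thesis by blast
qed

end

lemma decomp: "\<exists>k0 k1 r. p = [:k0:] + smult k1 [:-c,1:] + [:-c,1:]^2 * r \<and> (r = 0 \<or> degree r + 2 = degree (p::complex poly))"
proof -
  define L2 where "L2 = [:-c,1:]^2"
  have L2: "L2 \<noteq> 0" "degree L2 = 2" unfolding L2_def by (simp_all add: degree_power_eq)
  define r where "r = p div L2"
  define m where "m = p mod L2"
  have pe: "p = L2 * r + m" unfolding r_def m_def by (simp add: mult.commute)
  have dm: "m = 0 \<or> degree m < 2" using degree_mod_less[OF L2(1), of p] L2 by (simp add: m_def)
  have dm1: "degree m \<le> 1" using dm by auto
  have me: "m = [:coeff m 0 + c * coeff m 1:] + smult (coeff m 1) [:-c,1:]"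
  proof (rule poly_eqI)
    fix i show "coeff m i = coeff ([:coeff m 0 + c * coeff m 1:] + smult (coeff m 1) [:- c, 1:]) i"
      using coeff_eq_0[of m i] dm1 by (cases i; cases "i - 1") (auto simp: coeff_pCons)
  qed
  have dr: "r = 0 \<or> degree r + 2 = degree p"
  proof (cases "r = 0")
    case False
    have d1: "degree (L2 * r) = degree r + 2" using False L2 by (simp add: degree_mult_eq)
    have "degree m < degree (L2 * r)" using dm d1 by auto
    then have "degree p = degree (L2 * r)" using pe degree_add_eq_left by metis
    then show ?thesis using d1 by simp
  qed simp
  show ?thesis
    by (rule exI[of _ "coeff m 0 + c * coeff m 1"], rule exI[of _ "coeff m 1"], rule exI[of _ r])
       (use pe me dr in \<open>simp add: L2_def add.commute\<close>)
qed

lemma gen3: "q * ([:k0:] + smult k1 X + X^2 * r) = smult k0 q + smult k1 (q * X) + X^2 * (q * (r::complex poly))"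
  by (simp add: algebra_simps)
lemma gen4: "(smult x A + smult y B + smult z C) * X = smult x (X * A) + smult y (X * B) + smult z (X * (C::complex poly))"
  by (simp add: algebra_simps)

context setting begin

lemma lf_split: "lf uh (q * ([:k0:] + smult k1 L + L^2 * r)) = k0 * lf uh q + k1 * lf uh (q * L) + lf u (q * r)"
proof -
  note gen3[of q k0 k1 L r]
  then show ?thesis by (simp only: lf_add lf_smult rel)
qed

lemma orth_crit:
  assumes n: "2 \<le> n" and h1: "lf uh q = 0" and h2: "lf uh (q * L) = 0"
    and h3: "\<And>r. degree r < n - 2 \<Longrightarrow> lf u (q * r) = 0"
    and p: "degree p < n"
  shows "lf uh (q * p) = 0"
proof -
  obtain k0 k1 r where pe: "p = [:k0:] + smult k1 L + L^2 * r" and r: "r = 0 \<or> degree r + 2 = degree p"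
    using decomp[where c=c and p=p] by blast
  have "lf u (q * r) = 0"
  proof (cases "r = 0")
    case False
    then show ?thesis using r p n by (intro h3) auto
  qed simp
  then show ?thesis using h1 h2 by (simp only: pe lf_split) simp
qed

lemma comb_u: "r = 0 \<or> degree r < m \<Longrightarrow>
   lf u ((smult x (P (Suc (Suc m))) + smult y (P (Suc m)) + smult z (P m)) * r) = 0"
  using SMOP_orth[OF smop, of r "Suc (Suc m)"] SMOP_orth[OF smop, of r "Suc m"] SMOP_orth[OF smop, of r m]
  by (auto simp: distrib_right lf_add lf_smult)

lemma comb_t: "lf uh (smult x (P (Suc (Suc m))) + smult y (P (Suc m)) + smult z (P m))
   = x * T (Suc (Suc m)) + y * T (Suc m) + z * T m"
  by (simp only: lf_add lf_smult t_eq)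

lemma comb_s: "lf uh ((smult x (P (Suc (Suc m))) + smult y (P (Suc m)) + smult z (P m)) * L)
   = x * S (Suc (Suc m)) + y * S (Suc m) + z * S m"
proof -
  have "(smult x (P (Suc (Suc m))) + smult y (P (Suc m)) + smult z (P m)) * L
     = smult x (L * P (Suc (Suc m))) + smult y (L * P (Suc m)) + smult z (L * P m)"
    by (rule gen4)
  then show ?thesis by (simp only: lf_add lf_smult s_eq)
qed

lemma comb_orth:
  assumes "x * T (Suc (Suc m)) + y * T (Suc m) + z * T m = 0"
    and "x * S (Suc (Suc m)) + y * S (Suc m) + z * S m = 0"
    and "degree p < Suc (Suc m)"
  shows "lf uh ((smult x (P (Suc (Suc m))) + smult y (P (Suc m)) + smult z (P m)) * p) = 0"
  by (rule orth_crit[of "Suc (Suc m)"]) (use assms comb_t comb_s comb_u in auto)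

end

lemma det2: "det (mat_of_rows_list 2 [[a,b],[c,d]]) = (a*d - b*(c::'a::comm_ring_1))"
proof -
  have det1: "det A = A $$ (0,0)" if A: "(A :: 'a :: comm_ring_1 mat) \<in> carrier_mat 1 1" for A
  proof -
    have "mat_delete A 0 0 \<in> carrier_mat 0 0" using mat_delete_carrier[OF A, of 0 0] by simp
    then show ?thesis by (subst laplace_expansion_row[OF A, of 0]) (auto simp: cofactor_def)
  qed
  show ?thesis
  apply (subst laplace_expansion_row[of _ 2 0])
  apply (auto simp: mat_of_rows_list_def cofactor_def numeral_2_eq_2)
  apply (subst (1 2) det1)
  apply (auto simp: mat_delete_def)
  done
qed

lemma det3: "det (mat_of_rows_list 3 [[a,b,c],[d,e,f],[g,h,i]]) =
   a*(e*i - f*h) - b*(d*i - f*g) + c*(d*h - e*g::'a::comm_ring_1)"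
proof -
  have det1: "det A = A $$ (0,0)" if A: "(A :: 'a :: comm_ring_1 mat) \<in> carrier_mat 1 1" for A
  proof -
    have "mat_delete A 0 0 \<in> carrier_mat 0 0" using mat_delete_carrier[OF A, of 0 0] by simp
    then show ?thesis by (subst laplace_expansion_row[OF A, of 0]) (auto simp: cofactor_def)
  qed
  show ?thesis
  apply (subst laplace_expansion_row[of _ 3 0])
  apply (auto simp: mat_of_rows_list_def cofactor_def numeral_3_eq_3)
  apply (subst (1 2 3) laplace_expansion_row[of _ 2 0])
  apply (auto simp: mat_delete_def cofactor_def numeral_2_eq_2)
  apply (subst (1 2 3 4 5 6) det1)
  apply (auto simp: mat_delete_def algebra_simps)
  done
qed

lemma kernel2: "A * D - B * C = (0::complex) \<Longrightarrow>
   \<exists>y z. (y \<noteq> 0 \<or> z \<noteq> 0) \<and> y * B + z * A = 0 \<and> y * D + z * C = 0"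
proof (cases "A \<noteq> 0 \<or> B \<noteq> 0")
  case True
  assume "A * D - B * C = 0"
  then show ?thesis using True
    by (intro exI[of _ A] exI[of _ "-B"]) (auto simp: algebra_simps)
next
  case False
  show ?thesis
  proof (cases "C \<noteq> 0 \<or> D \<noteq> 0")
    case True
    then show ?thesis using False
      by (intro exI[of _ C] exI[of _ "-D"]) (auto simp: algebra_simps)
  next
    case False2: False
    then show ?thesis using False by (intro exI[of _ 1] exI[of _ 0]) auto
  qed
qed

context setting begin

lemma ds_eq: "ds (Suc (Suc m)) = S m * T (Suc m) - S (Suc m) * T m"
  unfolding dstar_def by (simp add: det2)

lemma uh0_nz: assumes "quasi_definite uh" shows "uh 0 \<noteq> 0"
proof
  assume h: "uh 0 = 0"
  have "ND uh 1" using assms qd_ND by blast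
  then have H: "\<forall>q. degree q < 1 \<longrightarrow> (\<forall>p. degree p < 1 \<longrightarrow> lf uh (q * p) = 0) \<longrightarrow> q = 0"
    unfolding ND_def .
  have o: "\<forall>p. degree p < 1 \<longrightarrow> lf uh (1 * p) = 0"
  proof (intro allI impI)
    fix p :: "complex poly" assume "degree p < 1"
    then have "p = [:coeff p 0:]" by (metis degree_0_id less_one)
    then show "lf uh (1 * p) = 0" using h by (metis lf_const mult_1 mult_zero_right)
  qed
  have d1: "degree (1::complex poly) < 1" by simp
  have "(1::complex poly) = 0" using H d1 o by blast
  then show False by simp
qed

lemma ds_nz: assumes "quasi_definite uh" shows "ds (Suc (Suc m)) \<noteq> 0"
proof
  assume "ds (Suc (Suc m)) = 0"
  then obtain y z where yz: "y \<noteq> 0 \<or> z \<noteq> 0" "y * S (Suc m) + z * S m = 0" "y * T (Suc m) + z * T m = 0"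
    using kernel2[of "S m" "T (Suc m)" "S (Suc m)" "T m"] ds_eq[of m] by auto
  define q where "q = smult 0 (P (Suc (Suc m))) + smult y (P (Suc m)) + smult z (P m)"
  have orth: "\<forall>p. degree p < Suc (Suc m) \<longrightarrow> lf uh (q * p) = 0"
    unfolding q_def using yz by (intro allI impI comb_orth) auto
  have dP: "degree (P k) = k" "coeff (P k) k = 1" for k using SMOP_deg[OF smop] SMOP_lc[OF smop] by auto
  have cq: "coeff q (Suc m) = y" "coeff q m = y * coeff (P (Suc m)) m + z"
    unfolding q_def using dP coeff_eq_0[of "P m" "Suc m"] by auto
  have "degree q \<le> Suc m"
  proof (rule degree_le, intro allI impI)
    fix i assume i: "Suc m < i"
    then show "coeff q i = 0"
      using coeff_eq_0[of "P (Suc m)" i] coeff_eq_0[of "P m" i] dP(1)[of "Suc m"] dP(1)[of m]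
      by (simp add: q_def)
  qed
  then have dq: "degree q < Suc (Suc m)" by simp
  have "ND uh (Suc (Suc m))" using assms qd_ND by blast
  then have "q = 0" using orth dq unfolding ND_def by blast
  then show False using cq yz(1) by auto
qed

end

lemma lf_quad: "lf v [:x, y, z:] = x * v 0 + y * v 1 + z * v 2"
  by (subst lf_upto[of _ 3]) (auto simp: numeral_3_eq_3 numeral_2_eq_2 degree_pCons_le le_less_trans lessThan_Suc)

lemma const_simps: "[:x:] * [:y:] = [:x * y:]" "[:x:] - [:y:] = [:x - y::'a::comm_ring_1:]"
  "A * [:k:] = smult k A"
  by simp_all

lemma gen5: "D \<noteq> 0 \<Longrightarrow> smult (1/D) (smult D A - smult x B + smult y C) = smult 1 A + smult (-x/D) B + smult (y/D) (C::complex poly)"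
  by (simp add: smult_add_right smult_diff_right)

context setting begin

abbreviation "al m \<equiv> - (S m * T (Suc (Suc m)) - S (Suc (Suc m)) * T m) / ds (Suc (Suc m))"
abbreviation "be m \<equiv> (S (Suc m) * T (Suc (Suc m)) - S (Suc (Suc m)) * T (Suc m)) / ds (Suc (Suc m))"

lemma Qhat_form: assumes "ds (Suc (Suc m)) \<noteq> 0"
  shows "Qhat u uh c P a b (Suc (Suc m)) = smult 1 (P (Suc (Suc m))) + smult (al m) (P (Suc m)) + smult (be m) (P m)"
proof -
  have "Qhat u uh c P a b (Suc (Suc m)) = smult (1 / ds (Suc (Suc m)))
     (smult (S m * T (Suc m) - S (Suc m) * T m) (P (Suc (Suc m)))
      - smult (S m * T (Suc (Suc m)) - S (Suc (Suc m)) * T m) (P (Suc m))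
      + smult (S (Suc m) * T (Suc (Suc m)) - S (Suc (Suc m)) * T (Suc m)) (P m))"
    unfolding Qhat_def by (simp add: det3 const_simps)
  also have "\<dots> = smult 1 (P (Suc (Suc m))) + smult (al m) (P (Suc m)) + smult (be m) (P m)"
    using gen5[OF assms, of "P (Suc (Suc m))" "S m * T (Suc (Suc m)) - S (Suc (Suc m)) * T m" "P (Suc m)"
       "S (Suc m) * T (Suc (Suc m)) - S (Suc (Suc m)) * T (Suc m)" "P m"] unfolding ds_eq by simp
  finally show ?thesis .
qed


lemma E12: assumes "ds (Suc (Suc m)) \<noteq> 0"
  shows "1 * T (Suc (Suc m)) + al m * T (Suc m) + be m * T m = 0"
    and "1 * S (Suc (Suc m)) + al m * S (Suc m) + be m * S m = 0"
  using assms unfolding ds_eq by (simp_all add: field_simps)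

lemma E3: assumes "ds (Suc (Suc m)) \<noteq> 0"
  shows "be m = ds (Suc (Suc (Suc m))) / ds (Suc (Suc m))"
  using assms ds_eq[of "Suc m"] by simp

lemma dP: "degree (P k) = k" "coeff (P k) k = 1" using SMOP_deg[OF smop] SMOP_lc[OF smop] by auto

lemma Qhat2_deg: assumes "ds (Suc (Suc m)) \<noteq> 0"
  shows "degree (Qhat u uh c P a b (Suc (Suc m))) = Suc (Suc m)"
    and "coeff (Qhat u uh c P a b (Suc (Suc m))) (Suc (Suc m)) = 1"
proof -
  let ?Q = "Qhat u uh c P a b (Suc (Suc m))"
  have c1: "coeff ?Q (Suc (Suc m)) = 1"
    unfolding Qhat_form[OF assms] using dP coeff_eq_0[of "P (Suc m)" "Suc (Suc m)"] coeff_eq_0[of "P m" "Suc (Suc m)"]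
    by simp
  have "degree ?Q \<le> Suc (Suc m)"
  proof (rule degree_le, intro allI impI)
    fix i assume i: "Suc (Suc m) < i"
    then show "coeff ?Q i = 0" unfolding Qhat_form[OF assms]
      using coeff_eq_0[of "P (Suc (Suc m))" i] coeff_eq_0[of "P (Suc m)" i] coeff_eq_0[of "P m" i] dP(1)
      by simp
  qed
  moreover have "?Q \<noteq> 0" using c1 by auto
  ultimately show "degree ?Q = Suc (Suc m)" using c1
    by (metis le_degree le_antisym one_neq_zero)
  show "coeff ?Q (Suc (Suc m)) = 1" by (rule c1)
qed

lemma Qhat2_orth: assumes "ds (Suc (Suc m)) \<noteq> 0" "degree p < Suc (Suc m)"
  shows "lf uh (Qhat u uh c P a b (Suc (Suc m)) * p) = 0"
  unfolding Qhat_form[OF assms(1)] by (rule comb_orth) (use E12[OF assms(1)] assms(2) in auto)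

lemma Qhat2_norm: assumes d2: "ds (Suc (Suc m)) \<noteq> 0" and d3: "ds (Suc (Suc (Suc m))) \<noteq> 0"
  shows "lf uh (Qhat u uh c P a b (Suc (Suc m)) * Qhat u uh c P a b (Suc (Suc m))) \<noteq> 0"
proof -
  let ?Q = "Qhat u uh c P a b (Suc (Suc m))"
  let ?R = "L^2 * P m"
  have L2: "L^2 \<noteq> 0" "degree (L^2) = 2" by (simp_all add: degree_power_eq)
  have L2c: "lead_coeff (L^2) = 1" by (simp only: lead_coeff_power) simp
  have Pm: "P m \<noteq> 0" using dP(2)[of m] by auto
  have dR: "degree ?R = Suc (Suc m)" using L2 Pm
    by (subst degree_mult_eq) (auto simp: SMOP_deg[OF smop])
  have cR: "coeff ?R (Suc (Suc m)) = 1"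
    using L2c dP dR lead_coeff_mult[of "L^2" "P m"] by (simp add: SMOP_deg[OF smop])
  have "degree (?Q - ?R) \<le> Suc (Suc m)"
    by (rule degree_diff_le) (use Qhat2_deg[OF d2] dR in auto)
  moreover have "coeff (?Q - ?R) (Suc (Suc m)) = 0" using Qhat2_deg[OF d2] cR by simp
  ultimately have dd: "?Q - ?R = 0 \<or> degree (?Q - ?R) < Suc (Suc m)" by (rule deg_less)
  have z: "lf uh (?Q * (?Q - ?R)) = 0"
  proof (cases "?Q - ?R = 0")
    case False
    then show ?thesis using dd Qhat2_orth[OF d2] by auto
  qed simp
  have "?Q * ?Q = ?Q * ?R + ?Q * (?Q - ?R)" by (simp add: algebra_simps)
  then have "lf uh (?Q * ?Q) = lf uh (?Q * ?R)" using z by (simp only: lf_add) simp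
  also have "?Q * ?R = L^2 * (?Q * P m)" by (simp only: mult.assoc mult.left_commute)
  also have "lf uh \<dots> = lf u (?Q * P m)" by (rule rel[symmetric])
  also have "\<dots> = be m * lf u (P m * P m)"
    unfolding Qhat_form[OF d2] distrib_right mult_smult_left lf_add lf_smult
    using SMOP_ort[OF smop, of "Suc (Suc m)" m] SMOP_ort[OF smop, of "Suc m" m] by simp
  finally have e: "lf uh (?Q * ?Q) = be m * lf u (P m * P m)" .
  have "be m \<noteq> 0" using E3[OF d2] d2 d3 by simp
  then show ?thesis using e SMOP_nz[OF smop, of m] by simp
qed

end

context setting begin

lemma Q1: "Qhat u uh c P a b (Suc 0) = [:- (uh 1 / uh 0), 1:]" unfolding Qhat_def by simp
lemma Q0: "Qhat u uh c P a b 0 = 1" unfolding Qhat_def by simp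

lemma Q1_norm: assumes "uh 0 \<noteq> 0"
  shows "lf uh (Qhat u uh c P a b (Suc 0) * Qhat u uh c P a b (Suc 0)) * uh 0 = - ds (Suc (Suc 0))"
proof -
  have "ds (Suc (Suc 0)) = lf uh (L * P 0) * lf uh (P (Suc 0)) - lf uh (L * P (Suc 0)) * lf uh (P 0)"
    unfolding ds_eq s_eq t_eq by simp
  also have "L * P (Suc 0) = [:c * b 0, - c - b 0, 1:]" by (simp add: P1')
  also have "L * P 0 = [:-c, 1:]" by (simp add: P0)
  finally have e1: "ds (Suc (Suc 0)) = (- c * uh 0 + uh 1) * (- b 0 * uh 0 + uh 1) - (c * b 0 * uh 0 + (- c - b 0) * uh 1 + uh 2) * uh 0"
    by (simp add: P0 P1' lf_lin lf_quad)
  have "Qhat u uh c P a b (Suc 0) * Qhat u uh c P a b (Suc 0) = [:(uh 1 / uh 0) * (uh 1 / uh 0), - 2 * (uh 1 / uh 0), 1:]"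
    by (simp add: Q1)
  then have e2: "lf uh (Qhat u uh c P a b (Suc 0) * Qhat u uh c P a b (Suc 0)) = (uh 1 / uh 0) * (uh 1 / uh 0) * uh 0 - 2 * (uh 1 / uh 0) * uh 1 + uh 2"
    by (simp add: lf_quad)
  show ?thesis unfolding e1 e2 using assms by (simp add: field_simps)
qed

lemma Qhat_SMOP: assumes h0: "uh 0 \<noteq> 0" and hd: "\<forall>n\<ge>2. ds n \<noteq> 0"
  shows "is_SMOP uh (Qhat u uh c P a b)"
proof -
  have hd': "ds (Suc (Suc m)) \<noteq> 0" for m using hd by simp
  have deg: "degree (Qhat u uh c P a b n) = n \<and> lead_coeff (Qhat u uh c P a b n) = 1" for n
  proof (cases n)
    case 0 then show ?thesis by (simp add: Q0)
  next
    case (Suc k) then show ?thesis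
    proof (cases k)
      case 0 then show ?thesis using Suc by (simp add: Q1)
    next
      case (Suc m) then show ?thesis using \<open>n = Suc k\<close> Qhat2_deg[OF hd'[of m]] by simp
    qed
  qed
  have orth: "lf uh (Qhat u uh c P a b n * p) = 0" if "degree p < n" for n p
  proof (cases n)
    case 0 then show ?thesis using that by simp
  next
    case (Suc k) then show ?thesis
    proof (cases k)
      case 0
      have "degree p = 0" using that Suc 0 by simp
      then have pe: "p = [:coeff p 0:]" by (rule degree_0_id[symmetric])
      have Qn: "Qhat u uh c P a b n = [:- (uh 1 / uh 0), 1:]" using Suc 0 Q1 by simp
      have "Qhat u uh c P a b n * p = [:- (uh 1 / uh 0), 1:] * [:coeff p 0:]"
        unfolding Qn using pe by (rule arg_cong)
      also have "\<dots> = smult (coeff p 0) [:- (uh 1 / uh 0), 1:]" by (rule const_simps(3))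
      finally show ?thesis using h0 by (simp add: lf_smult lf_lin field_simps)
    next
      case (Suc m) then show ?thesis using \<open>n = Suc k\<close> Qhat2_orth[OF hd'[of m]] that by simp
    qed
  qed
  have norm: "lf uh (Qhat u uh c P a b n * Qhat u uh c P a b n) \<noteq> 0" for n
  proof (cases n)
    case 0 then show ?thesis using h0 by (simp add: Q0)
  next
    case (Suc k) then show ?thesis
    proof (cases k)
      case 0 then show ?thesis using Suc Q1_norm[OF h0] hd'[of 0] by (metis mult_zero_left neg_equal_0_iff_equal)
    next
      case (Suc m) then show ?thesis using \<open>n = Suc k\<close> Qhat2_norm[OF hd'[of m] hd'[of "Suc m"]] by simp
    qed
  qed
  have ort: "lf uh (Qhat u uh c P a b n * Qhat u uh c P a b m) = 0" if "n \<noteq> m" for n m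
  proof (cases "m < n")
    case True then show ?thesis using orth[of "Qhat u uh c P a b m" n] deg[of m] by simp
  next
    case False
    then have "n < m" using that by simp
    then show ?thesis using orth[of "Qhat u uh c P a b n" m] deg[of n] by (simp add: mult.commute)
  qed
  show ?thesis unfolding is_SMOP_def using deg ort norm by blast
qed

end

theorem mainTheorem3:
  fixes u uh :: "nat \<Rightarrow> complex" and c :: complex
    and P :: "nat \<Rightarrow> complex poly" and a b :: "nat \<Rightarrow> complex"
  assumes qd: "quasi_definite u"
    and smop: "is_SMOP u P"
    and rec0: "[:0, 1:] * P 0 = P 1 + smult (b 0) (P 0)"
    and rec: "\<And>n. [:0, 1:] * P (Suc n) = P (Suc (Suc n)) + smult (b (Suc n)) (P (Suc n))
                      + smult (a (Suc n)) (P n)"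
    and anz: "\<And>n. n \<ge> 1 \<Longrightarrow> a n \<noteq> 0"
    and rel: "\<And>p. lf u p = lf uh ([:- c, 1:] ^ 2 * p)"
  shows "(quasi_definite uh \<longleftrightarrow>
            (uh 0 \<noteq> 0 \<and> (\<forall>n\<ge>2. dstar u uh c P a b n \<noteq> 0)))
       \<and> (quasi_definite uh \<longrightarrow>
            (\<forall>Q. is_SMOP uh Q \<longleftrightarrow> Q = Qhat u uh c P a b))"
proof -
  interpret setting u uh c P a b
    by (rule setting.intro[OF qd smop rec0 rec anz rel])
  have A: "uh 0 \<noteq> 0 \<and> (\<forall>n\<ge>2. dstar u uh c P a b n \<noteq> 0)" if "quasi_definite uh"
  proof (intro conjI allI impI)
    show "uh 0 \<noteq> 0" by (rule uh0_nz[OF that])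
    fix n :: nat assume "2 \<le> n"
    then obtain m where "n = Suc (Suc m)" by (metis add_2_eq_Suc le_Suc_ex)
    then show "dstar u uh c P a b n \<noteq> 0" using ds_nz[OF that] by simp
  qed
  have B: "is_SMOP uh (Qhat u uh c P a b)" if "uh 0 \<noteq> 0 \<and> (\<forall>n\<ge>2. dstar u uh c P a b n \<noteq> 0)"
    using Qhat_SMOP that by blast
  show ?thesis
  proof
    show "quasi_definite uh \<longleftrightarrow> (uh 0 \<noteq> 0 \<and> (\<forall>n\<ge>2. dstar u uh c P a b n \<noteq> 0))"
      using A B SMOP_qd by blast
    show "quasi_definite uh \<longrightarrow> (\<forall>Q. is_SMOP uh Q \<longleftrightarrow> Q = Qhat u uh c P a b)"
    proof (intro impI allI)
      fix Q assume q: "quasi_definite uh"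
      show "is_SMOP uh Q \<longleftrightarrow> Q = Qhat u uh c P a b"
        using SMOP_unique B[OF A[OF q]] by blast
    qed
  qed
qed

end
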